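(* Let $k\ge2$ be an integer and $\lambda>0$. If the median of the Poisson distribution of order $k$ with parameter $\lambda$ is $0$, then its mode is also $0$ (and $0$ is the unique mode).
   Context: For an integer $k\ge1$ and a real $\lambda>0$, the Poisson distribution of order $k$ with parameter $\lambda$ is the distribution on $\{0,1,2,\dots\}$ with probability mass function $$f_k(n;\lambda)=e^{-k\lambda}\sum_{\substack{n_1,\dots,n_k\ge 0\\ n_1+2n_2+\dots+kn_k=n}}\frac{\lambda^{n_1+\dots+n_k}}{n_1!\cdots n_k!},\qquad n=0,1,2,\dots$$ If $Y$ is a random variable with this distribution, the median is defined as the smallest integer $\nu$ such that $P(Y\le\nu)\ge\frac12$. A mode is any $n$ at which $f_k(n;\lambda)$ attains its global maximum over $n\ge0$. *)

theory Defs
  imports Complex_Main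
begin

definition poisk_tuples :: "nat \<Rightarrow> nat \<Rightarrow> (nat \<Rightarrow> nat) set" where
  "poisk_tuples k n = {m. (\<forall>i. i \<notin> {1..k} \<longrightarrow> m i = 0) \<and> (\<Sum>i=1..k. i * m i) = n}"

definition poisk_pmf :: "nat \<Rightarrow> real \<Rightarrow> nat \<Rightarrow> real" where
  "poisk_pmf k lam n = exp (- real k * lam) *
     (\<Sum>m\<in>poisk_tuples k n. lam ^ (\<Sum>i=1..k. m i) / (\<Prod>i=1..k. fact (m i)))"

definition poisk_cdf :: "nat \<Rightarrow> real \<Rightarrow> nat \<Rightarrow> real" where
  "poisk_cdf k lam n = (\<Sum>j\<le>n. poisk_pmf k lam j)"

definition poisk_median :: "nat \<Rightarrow> real \<Rightarrow> nat" where
  "poisk_median k lam = (LEAST \<nu>. poisk_cdf k lam \<nu> \<ge> 1/2)"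

definition poisk_is_mode :: "nat \<Rightarrow> real \<Rightarrow> nat \<Rightarrow> bool" where
  "poisk_is_mode k lam n \<longleftrightarrow> (\<forall>j. poisk_pmf k lam j \<le> poisk_pmf k lam n)"

end

theory Submission
  imports Defs
begin

definition BZ :: "nat set \<Rightarrow> nat \<Rightarrow> (nat \<Rightarrow> nat) set" where
  "BZ I M = {m. (\<forall>i. i \<notin> I \<longrightarrow> m i = 0) \<and> (\<forall>i. m i < M)}"

lemma BZ_empty: "BZ {} M = (if M = 0 then {} else {\<lambda>_. 0})"
  by (auto simp: BZ_def)

lemma BZ_insert:
  assumes "a \<notin> I"
  shows "BZ (insert a I) M = (\<lambda>(m,j). m(a:=j)) ` (BZ I M \<times> {..<M})"
proof
  show "BZ (insert a I) M \<subseteq> (\<lambda>(m,j). m(a:=j)) ` (BZ I M \<times> {..<M})"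
  proof
    fix m assume m: "m \<in> BZ (insert a I) M"
    have "m = (\<lambda>(m,j). m(a:=j)) (m(a:=0), m a)" by auto
    moreover have "(m(a:=0), m a) \<in> BZ I M \<times> {..<M}" using m by (auto simp: BZ_def)
    ultimately show "m \<in> (\<lambda>(m,j). m(a:=j)) ` (BZ I M \<times> {..<M})" by blast
  qed
next
  show "(\<lambda>(m,j). m(a:=j)) ` (BZ I M \<times> {..<M}) \<subseteq> BZ (insert a I) M"
    by (auto simp: BZ_def)
qed

lemma BZ_inj:
  assumes "a \<notin> I"
  shows "inj_on (\<lambda>(m,j). m(a:=j)) (BZ I M \<times> {..<M})"
proof (rule inj_onI, clarify)
  fix m j m' j'
  assume h: "m \<in> BZ I M" "m' \<in> BZ I M" "m(a:=j) = m'(a:=j')"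
  then have "m a = 0" "m' a = 0" using assms by (auto simp: BZ_def)
  have "j = j'" using fun_cong[OF h(3), of a] by simp
  moreover have "m = m'"
  proof
    fix i show "m i = m' i"
      using fun_cong[OF h(3), of i] \<open>m a = 0\<close> \<open>m' a = 0\<close> by (cases "i = a") auto
  qed
  ultimately show "m = m' \<and> j = j'" by simp
qed

lemma finite_BZ: "finite I \<Longrightarrow> finite (BZ I M)"
proof (induction I rule: finite_induct)
  case empty then show ?case by (simp add: BZ_empty)
next
  case (insert a I) then show ?case by (simp add: BZ_insert)
qed

lemma BZ_prod:
  fixes g :: "nat \<Rightarrow> real"
  assumes "finite I" "M > 0"
  shows "(\<Sum>m\<in>BZ I M. \<Prod>i\<in>I. g (m i)) = (\<Prod>i\<in>I. \<Sum>j<M. g j)"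
  using assms
proof (induction I rule: finite_induct)
  case empty then show ?case using assms(2) by (simp add: BZ_empty)
next
  case (insert a I)
  have "(\<Sum>m\<in>BZ (insert a I) M. \<Prod>i\<in>insert a I. g (m i))
      = (\<Sum>p\<in>BZ I M \<times> {..<M}. \<Prod>i\<in>insert a I. g (((fst p)(a := snd p)) i))"
    unfolding BZ_insert[OF insert(2)]
    by (subst sum.reindex[OF BZ_inj[OF insert(2)]]) (simp add: case_prod_beta)
  also have "\<dots> = (\<Sum>p\<in>BZ I M \<times> {..<M}. g (snd p) * (\<Prod>i\<in>I. g (fst p i)))"
  proof (rule sum.cong[OF refl])
    fix p assume "p \<in> BZ I M \<times> {..<M}"
    have "(\<Prod>i\<in>I. g (((fst p)(a := snd p)) i)) = (\<Prod>i\<in>I. g (fst p i))"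
      using insert(2) by (intro prod.cong) auto
    then show "(\<Prod>i\<in>insert a I. g (((fst p)(a := snd p)) i)) = g (snd p) * (\<Prod>i\<in>I. g (fst p i))"
      using insert(1,2) by simp
  qed
  also have "\<dots> = (\<Sum>m\<in>BZ I M. \<Sum>j<M. g j * (\<Prod>i\<in>I. g (m i)))"
    by (simp add: sum.cartesian_product case_prod_beta)
  also have "\<dots> = (\<Sum>j<M. g j) * (\<Sum>m\<in>BZ I M. \<Prod>i\<in>I. g (m i))"
    by (simp add: sum_distrib_left sum_distrib_right sum.swap[of _ "BZ I M"])
  also have "\<dots> = (\<Prod>i\<in>insert a I. \<Sum>j<M. g j)"
    using insert by simp
  finally show ?case .
qed


definition wt :: "nat \<Rightarrow> (nat \<Rightarrow> nat) \<Rightarrow> nat" where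
  "wt k m = (\<Sum>i=1..k. i * m i)"

definition FF :: "nat \<Rightarrow> real \<Rightarrow> (nat \<Rightarrow> nat) \<Rightarrow> real" where
  "FF k lam m = lam ^ (\<Sum>i=1..k. m i) / (\<Prod>i=1..k. fact (m i))"

lemma FF_eq: "FF k lam m = (\<Prod>i\<in>{1..k}. lam ^ m i / fact (m i))"
  by (simp add: FF_def power_sum prod_dividef)

lemma FF_pos: "lam > 0 \<Longrightarrow> FF k lam m > 0"
  unfolding FF_def by (intro divide_pos_pos zero_less_power prod_pos) auto

lemma FF_nonneg: "lam > 0 \<Longrightarrow> FF k lam m \<ge> 0"
  using FF_pos[of lam k m] by simp

lemma tuples_sub: "poisk_tuples k n \<subseteq> BZ {1..k} (Suc n)"
proof
  fix m assume m: "m \<in> poisk_tuples k n"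
  have "m i < Suc n" for i
  proof (cases "i \<in> {1..k}")
    case True
    have "m i \<le> i * m i" using True by simp
    also have "\<dots> \<le> (\<Sum>i=1..k. i * m i)"
      by (rule member_le_sum[OF True]) auto
    finally show ?thesis using m by (simp add: poisk_tuples_def)
  next
    case False then show ?thesis using m by (simp add: poisk_tuples_def)
  qed
  then show "m \<in> BZ {1..k} (Suc n)" using m by (auto simp: BZ_def poisk_tuples_def)
qed

lemma finite_tuples: "finite (poisk_tuples k n)"
  using finite_subset[OF tuples_sub finite_BZ] by simp

lemma cdf_eq:
  "poisk_cdf k lam N = exp (- real k * lam) * (\<Sum>m\<in>{m\<in>BZ {1..k} (Suc N). wt k m \<le> N}. FF k lam m)"
proof -
  let ?S = "{m\<in>BZ {1..k} (Suc N). wt k m \<le> N}"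
  have fin: "finite ?S" using finite_BZ[of "{1..k}" "Suc N"] by simp
  have eq: "{m\<in>?S. wt k m = y} = poisk_tuples k y" if "y \<le> N" for y
  proof -
    have "poisk_tuples k y \<subseteq> BZ {1..k} (Suc N)"
    proof -
      have "BZ {1..k} (Suc y) \<subseteq> BZ {1..k} (Suc N)"
        using that by (auto simp: BZ_def intro: less_le_trans)
      then show ?thesis using tuples_sub[of k y] by blast
    qed
    then show ?thesis using that by (auto simp: poisk_tuples_def wt_def BZ_def)
  qed
  have "(\<Sum>m\<in>?S. FF k lam m) = (\<Sum>y\<in>{..N}. \<Sum>m\<in>{m\<in>?S. wt k m = y}. FF k lam m)"
    by (rule sum.group[symmetric]) (use fin in auto)
  also have "\<dots> = (\<Sum>y\<le>N. \<Sum>m\<in>poisk_tuples k y. FF k lam m)"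
  proof (rule sum.cong[OF refl])
    fix y assume "y \<in> {..N}"
    then have "y \<le> N" by simp
    show "(\<Sum>m\<in>{m\<in>?S. wt k m = y}. FF k lam m) = (\<Sum>m\<in>poisk_tuples k y. FF k lam m)"
      by (subst eq[OF \<open>y \<le> N\<close>]) (rule refl)
  qed
  finally show ?thesis
    by (simp add: poisk_cdf_def poisk_pmf_def FF_def sum_distrib_left)
qed

lemma partial_exp_le: "(\<Sum>j<n. lam ^ j / fact j) \<le> exp (lam::real)" if "lam > 0"
proof -
  have s: "(\<lambda>j. lam ^ j / fact j) sums exp lam"
    using exp_converges[of lam] by (simp add: divide_inverse mult.commute)
  show ?thesis
    using sum_le_suminf[OF sums_summable[OF s], of "{..<n}"] sums_unique[OF s] that by simp
qed

lemma cdf_le1: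
  assumes "lam > 0"
  shows "poisk_cdf k lam N \<le> 1"
proof -
  let ?S = "{m\<in>BZ {1..k} (Suc N). wt k m \<le> N}"
  have "(\<Sum>m\<in>?S. FF k lam m) \<le> (\<Sum>m\<in>BZ {1..k} (Suc N). FF k lam m)"
    by (rule sum_mono2) (use finite_BZ assms FF_nonneg in auto)
  also have "\<dots> = (\<Prod>i\<in>{1..k}. \<Sum>j<Suc N. lam ^ j / fact j)"
    unfolding FF_eq by (rule BZ_prod) auto
  also have "\<dots> \<le> (\<Prod>i\<in>{1..k}. exp lam)"
    using assms partial_exp_le[OF assms, of "Suc N"]
    by (intro prod_mono conjI sum_nonneg) auto
  also have "\<dots> = exp lam ^ k" by simp
  finally have "(\<Sum>m\<in>?S. FF k lam m) \<le> exp lam ^ k" .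
  then have "poisk_cdf k lam N \<le> exp (- real k * lam) * exp lam ^ k"
    unfolding cdf_eq by (intro mult_left_mono) auto
  also have "\<dots> = 1"
    by (simp add: exp_of_nat_mult[symmetric] exp_add[symmetric])
  finally show ?thesis .
qed

lemma cdf_ge:
  assumes "lam > 0" "M > 0"
  shows "poisk_cdf k lam (k*k*M) \<ge> exp (- real k * lam) * (\<Sum>j<M. lam ^ j / fact j) ^ k"
proof -
  let ?N = "k*k*M"
  let ?S = "{m\<in>BZ {1..k} (Suc ?N). wt k m \<le> ?N}"
  have sub: "BZ {1..k} M \<subseteq> ?S"
  proof
    fix m assume m: "m \<in> BZ {1..k} M"
    have "wt k m \<le> (\<Sum>i=1..k. k * M)"
      unfolding wt_def
    proof (rule sum_mono)
      fix i assume "i \<in> {1..k}"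
      then show "i * m i \<le> k * M" using m by (intro mult_le_mono) (auto simp: BZ_def less_imp_le)
    qed
    then have "wt k m \<le> ?N" by simp
    moreover have "m i < Suc ?N" for i
    proof -
      have "m i < M" using m by (simp add: BZ_def)
      moreover have "M \<le> ?N" if "i \<in> {1..k}" using that by simp
      moreover have "m i = 0" if "i \<notin> {1..k}" using that m by (simp add: BZ_def)
      ultimately show ?thesis
      proof (cases "i \<in> {1..k}")
        case True
        then have "M \<le> ?N" by simp
        then show ?thesis using \<open>m i < M\<close> by linarith
      qed auto
    qed
    ultimately show "m \<in> ?S" using m by (auto simp: BZ_def)
  qed
  have "(\<Sum>j<M. lam ^ j / fact j) ^ k = (\<Prod>i\<in>{1..k}. \<Sum>j<M. lam ^ j / fact j)" by simp
  also have "\<dots> = (\<Sum>m\<in>BZ {1..k} M. FF k lam m)"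
    unfolding FF_eq by (rule BZ_prod[symmetric]) (use assms in auto)
  also have "\<dots> \<le> (\<Sum>m\<in>?S. FF k lam m)"
    by (rule sum_mono2[OF _ sub]) (use finite_BZ[of "{1..k}" "Suc ?N"] assms FF_nonneg in auto)
  finally show ?thesis unfolding cdf_eq by (intro mult_left_mono) auto
qed

lemma cdf_exists:
  assumes "lam > 0"
  shows "\<exists>N. poisk_cdf k lam N \<ge> 1/2"
proof -
  have s: "(\<lambda>j. lam ^ j / fact j) sums exp lam"
    using exp_converges[of lam] by (simp add: divide_inverse mult.commute)
  then have "(\<lambda>M. \<Sum>j<M. lam ^ j / fact j) \<longlonglongrightarrow> exp lam" by (simp add: sums_def)
  then have A: "(\<lambda>M. exp (- real k * lam) * (\<Sum>j<M. lam ^ j / fact j) ^ k) \<longlonglongrightarrow> exp (- real k * lam) * exp lam ^ k"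
    by (intro tendsto_intros)
  have B: "exp (- real k * lam) * exp lam ^ k = 1"
    by (simp add: exp_of_nat_mult[symmetric] exp_add[symmetric])
  have lim: "(\<lambda>M. exp (- real k * lam) * (\<Sum>j<M. lam ^ j / fact j) ^ k) \<longlonglongrightarrow> 1"
    using A unfolding B .
  have "eventually (\<lambda>M. 1/2 < exp (- real k * lam) * (\<Sum>j<M. lam ^ j / fact j) ^ k) sequentially"
    by (rule order_tendstoD(1)[OF lim]) simp
  then obtain M0 where M0: "\<And>M. M \<ge> M0 \<Longrightarrow> 1/2 < exp (- real k * lam) * (\<Sum>j<M. lam ^ j / fact j) ^ k"
    unfolding eventually_sequentially by blast
  define M where "M = max M0 1"
  have "1/2 < exp (- real k * lam) * (\<Sum>j<M. lam ^ j / fact j) ^ k" using M0 M_def by simp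
  also have "\<dots> \<le> poisk_cdf k lam (k*k*M)" by (rule cdf_ge) (use assms M_def in auto)
  finally show ?thesis by (intro exI[of _ "k*k*M"]) simp
qed

lemma pmf_pos:
  assumes "lam > 0" "k \<ge> 1"
  shows "poisk_pmf k lam j > 0"
proof -
  let ?m = "\<lambda>i. if i = 1 then j else 0::nat"
  have sumeq: "(\<Sum>i=1..k. i * (if i = 1 then j else 0)) = (\<Sum>i\<in>{1..k}. if i = 1 then j else 0)"
    by (rule sum.cong) auto
  have sumeq2: "(\<Sum>i\<in>{1..k}. if i = 1 then j else 0) = j"
    using assms(2) by (subst sum.delta) auto
  have "?m \<in> poisk_tuples k j"
    using assms(2) sumeq sumeq2 by (simp add: poisk_tuples_def)
  then have "0 < (\<Sum>m\<in>poisk_tuples k j. FF k lam m)"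
    by (intro sum_pos2[OF finite_tuples]) (use assms FF_pos FF_nonneg in auto)
  then show ?thesis by (simp add: poisk_pmf_def FF_def)
qed

lemma pmf_lt:
  assumes "lam > 0" "k \<ge> 1" "poisk_pmf k lam 0 \<ge> 1/2" "n \<ge> 1"
  shows "poisk_pmf k lam n < poisk_pmf k lam 0"
proof -
  have "poisk_pmf k lam 0 + poisk_pmf k lam n + poisk_pmf k lam (Suc n) = (\<Sum>j\<in>{0, n, Suc n}. poisk_pmf k lam j)"
    using assms(4) by simp
  also have "\<dots> \<le> poisk_cdf k lam (Suc n)"
    unfolding poisk_cdf_def
    by (rule sum_mono2) (use pmf_pos[OF assms(1,2)] in \<open>auto intro: less_imp_le\<close>)
  also have "\<dots> \<le> 1" by (rule cdf_le1[OF assms(1)])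
  finally show ?thesis using pmf_pos[OF assms(1,2), of "Suc n"] assms(3) by linarith
qed

theorem mainTheorem4:
  fixes k :: nat and lam :: real
  assumes "k \<ge> 2" and "lam > 0"
    and "poisk_median k lam = 0"
  shows "poisk_is_mode k lam 0 \<and> (\<forall>n. poisk_is_mode k lam n \<longrightarrow> n = 0)"
proof -
  obtain N where "poisk_cdf k lam N \<ge> 1/2" using cdf_exists[OF assms(2)] by blast
  then have "poisk_cdf k lam (poisk_median k lam) \<ge> 1/2"
    unfolding poisk_median_def by (rule LeastI)
  then have h0: "poisk_pmf k lam 0 \<ge> 1/2"
    using assms(3) by (simp add: poisk_cdf_def)
  have k1: "k \<ge> 1" using assms(1) by simp
  have lt: "poisk_pmf k lam n < poisk_pmf k lam 0" if "n \<ge> 1" for n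
    using pmf_lt[OF assms(2) k1 h0 that] .
  have "poisk_is_mode k lam 0"
    unfolding poisk_is_mode_def
  proof
    fix j show "poisk_pmf k lam j \<le> poisk_pmf k lam 0"
      using lt[of j] by (cases "j = 0") auto
  qed
  moreover have "\<forall>n. poisk_is_mode k lam n \<longrightarrow> n = 0"
  proof (intro allI impI)
    fix n assume "poisk_is_mode k lam n"
    then have "poisk_pmf k lam 0 \<le> poisk_pmf k lam n" by (simp add: poisk_is_mode_def)
    then show "n = 0" using lt[of n] by (cases "n = 0") auto
  qed
  ultimately show ?thesis by blast
qed

end
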